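(* Let $\mathscr{H}$ be a finite-dimensional complex Hilbert space, let $A=\{a_k\}_{k=1}^{m}$ be a tight frame of $\mathscr{H}$ with frame bound $\alpha>0$ and $B=\{b_j\}_{j=1}^{n}$ a tight frame of $\mathscr{H}$ with frame bound $\beta>0$, and suppose $A$ and $B$ are $s$-order incompatible. Let $$t_{\min}=\min\Big\{t\ :\ \text{for all } S\subsetneq I,\ T\subsetneq J \text{ with } |S|+|T|>t,\ \operatorname{span}\big(\{a_k\}_{k\in S}\cup\{b_j\}_{j\in T}\big)=\mathscr{H}\Big\},$$ where $I=\{1,\dots,m\}$ and $J=\{1,\dots,n\}$. Then $s+t_{\min}=m+n$.
   Context: A finite family $\{a_k\}_{k=1}^{m}\subset\mathscr{H}$ is a tight frame with frame bound $\alpha>0$ if $\sum_{k=1}^{m}|\langle x,a_k\rangle|^2=\alpha\|x\|^2$ for all $x\in\mathscr{H}$. The tight frames $A$ (bound $\alpha$) and $B$ (bound $\beta$) are called $s$-order incompatible, for an integer $s$, if: (1) for all nonempty $S\subseteq I$, $T\subseteq J$ with $|S|+|T|<s$ and every nonzero $x\in\mathscr{H}$, the two equalities $\sum_{k\in S}|\langle x,a_k\rangle|^2=\alpha\|x\|^2$ and $\sum_{j\in T}|\langle x,b_j\rangle|^2=\beta\|x\|^2$ do not both hold; and (2) there exist nonempty $S\subseteq I$, $T\subseteq J$ with $|S|+|T|=s$ and a nonzero $x\in\mathscr{H}$ for which both equalities hold. Spans are over $\mathbb{C}$; $S\subsetneq I$ denotes a proper (possibly empty) subset. *)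

theory Defs
  imports "HOL-Analysis.Analysis"
begin

text \<open>A finite-dimensional complex Hilbert space is modelled (up to unitary isomorphism)
as complex^d with the standard inner product, linear in the first argument.\<close>

definition cinner :: "complex ^ 'd \<Rightarrow> complex ^ 'd \<Rightarrow> complex" where
  "cinner x y = (\<Sum>i\<in>UNIV. x $ i * cnj (y $ i))"

definition tight_frame :: "(nat \<Rightarrow> complex ^ 'd) \<Rightarrow> nat \<Rightarrow> real \<Rightarrow> bool" where
  "tight_frame a m \<alpha> \<longleftrightarrow> \<alpha> > 0 \<and>
     (\<forall>x :: complex ^ 'd. (\<Sum>k\<in>{1..m}. (cmod (cinner x (a k)))\<^sup>2) = \<alpha> * (norm x)\<^sup>2)"

definition s_order_incompatible ::
  "(nat \<Rightarrow> complex ^ 'd) \<Rightarrow> nat \<Rightarrow> real \<Rightarrow> (nat \<Rightarrow> complex ^ 'd) \<Rightarrow> nat \<Rightarrow> real \<Rightarrow> nat \<Rightarrow> bool" where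
  "s_order_incompatible a m \<alpha> b n \<beta> s \<longleftrightarrow>
     (\<forall>S T x. S \<noteq> {} \<and> S \<subseteq> {1..m} \<and> T \<noteq> {} \<and> T \<subseteq> {1..n} \<and> card S + card T < s \<and> x \<noteq> 0 \<longrightarrow>
        \<not> ((\<Sum>k\<in>S. (cmod (cinner x (a k)))\<^sup>2) = \<alpha> * (norm x)\<^sup>2 \<and>
           (\<Sum>j\<in>T. (cmod (cinner x (b j)))\<^sup>2) = \<beta> * (norm x)\<^sup>2)) \<and>
     (\<exists>S T x. S \<noteq> {} \<and> S \<subseteq> {1..m} \<and> T \<noteq> {} \<and> T \<subseteq> {1..n} \<and> card S + card T = s \<and> x \<noteq> 0 \<and>
        (\<Sum>k\<in>S. (cmod (cinner x (a k)))\<^sup>2) = \<alpha> * (norm x)\<^sup>2 \<and>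
        (\<Sum>j\<in>T. (cmod (cinner x (b j)))\<^sup>2) = \<beta> * (norm x)\<^sup>2)"

text \<open>Complex span: \<open>vec.span\<close> is the span w.r.t. the scalar multiplication \<open>(*s)\<close> over complex.\<close>

definition t_min :: "(nat \<Rightarrow> complex ^ 'd) \<Rightarrow> nat \<Rightarrow> (nat \<Rightarrow> complex ^ 'd) \<Rightarrow> nat \<Rightarrow> nat" where
  "t_min a m b n = (LEAST t. \<forall>S T. S \<subset> {1..m} \<and> T \<subset> {1..n} \<and> card S + card T > t \<longrightarrow>
       vec.span (a ` S \<union> b ` T) = (UNIV :: (complex ^ 'd) set))"

end

theory Submission
  imports Defs
begin

lemma inner_cinner: "inner x y = Re (cinner x y)"
  by (simp add: inner_vec_def cinner_def inner_complex_def Re_sum)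

lemma cinner_scale: "cinner x (c *s y) = cnj c * cinner x y"
  by (simp add: cinner_def sum_distrib_left algebra_simps)

lemma cinner_add: "cinner x (y + z) = cinner x y + cinner x z"
  by (simp add: cinner_def sum.distrib algebra_simps)

lemma cinner_zero: "cinner x 0 = 0"
  by (simp add: cinner_def)

lemma scaleR_as_vec: "c *\<^sub>R (y :: complex ^ 'd) = (complex_of_real c) *s y"
  unfolding vec_eq_iff vector_scaleR_component vector_smult_component
  by (simp add: scaleR_conv_of_real)

lemma perp_exists:
  fixes V :: "(complex ^ 'd) set"
  assumes "vec.span V \<noteq> UNIV"
  shows "\<exists>x. x \<noteq> 0 \<and> (\<forall>v\<in>V. cinner x v = 0)"
proof -
  let ?W = "vec.span V"
  have sub: "subspace ?W"
    unfolding subspace_def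
    by (auto simp: scaleR_as_vec vec.span_zero vec.span_add vec.span_scale)
  have spanW: "span ?W = ?W" using sub span_eq_iff by blast
  have "span ?W \<noteq> span UNIV" unfolding spanW span_UNIV using assms .
  then have psub: "span ?W \<subset> span UNIV" by (simp add: psubsetI)
  then obtain x where x: "x \<noteq> 0" "\<And>y. y \<in> span ?W \<Longrightarrow> orthogonal x y"
    using orthogonal_to_subspace_exists_gen[OF psub] by blast
  have "cinner x v = 0" if "v \<in> V" for v
  proof -
    have v1: "v \<in> ?W" using vec.span_base[OF that] .
    have v2: "(\<i> *s v) \<in> ?W" using vec.span_scale[OF v1] .
    have "Re (cinner x v) = 0" using x(2)[of v] v1 \<open>span ?W = ?W\<close>
      by (simp add: orthogonal_def inner_cinner)
    moreover have "Re (cinner x (\<i> *s v)) = 0" using x(2)[of "\<i> *s v"] v2 \<open>span ?W = ?W\<close>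
      by (simp add: orthogonal_def inner_cinner)
    then have "Im (cinner x v) = 0" by (simp add: cinner_scale)
    ultimately show ?thesis by (simp add: complex_eq_iff)
  qed
  then show ?thesis using x(1) by blast
qed

lemma perp_not_span:
  fixes V :: "(complex ^ 'd) set"
  assumes "x \<noteq> 0" "\<forall>v\<in>V. cinner x v = 0"
  shows "vec.span V \<noteq> UNIV"
proof
  assume h: "vec.span V = UNIV"
  have "vec.subspace {y. cinner x y = 0}"
    unfolding vec.subspace_def by (auto simp: cinner_zero cinner_add cinner_scale)
  then have "vec.span V \<subseteq> {y. cinner x y = 0}"
    using assms(2) by (intro vec.span_minimal) auto
  then have "cinner x x = 0" using h by auto
  then have "inner x x = 0" by (simp add: inner_cinner)
  then show False using assms(1) by simp
qed

lemma tight_eq: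
  fixes a :: "nat \<Rightarrow> complex ^ 'd"
  assumes "tight_frame a m \<alpha>" "S \<subseteq> {1..m}"
  shows "((\<Sum>k\<in>S. (cmod (cinner x (a k)))\<^sup>2) = \<alpha> * (norm x)\<^sup>2) \<longleftrightarrow>
         (\<forall>k\<in>{1..m} - S. cinner x (a k) = 0)"
proof -
  have fin: "finite ({1..m} - S)" by simp
  have "(\<Sum>k\<in>{1..m}. (cmod (cinner x (a k)))\<^sup>2) =
        (\<Sum>k\<in>S. (cmod (cinner x (a k)))\<^sup>2) + (\<Sum>k\<in>{1..m} - S. (cmod (cinner x (a k)))\<^sup>2)"
    using assms(2) by (metis (no_types) add.commute finite_atLeastAtMost sum.subset_diff)
  moreover have "(\<Sum>k\<in>{1..m}. (cmod (cinner x (a k)))\<^sup>2) = \<alpha> * (norm x)\<^sup>2"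
    using assms(1) unfolding tight_frame_def by blast
  moreover have "((\<Sum>k\<in>{1..m} - S. (cmod (cinner x (a k)))\<^sup>2) = 0) \<longleftrightarrow>
        (\<forall>k\<in>{1..m} - S. cinner x (a k) = 0)"
    using sum_nonneg_eq_0_iff[OF fin, of "\<lambda>k. (cmod (cinner x (a k)))\<^sup>2"] by simp
  ultimately show ?thesis by linarith
qed

theorem mainTheorem3:
  fixes a b :: "nat \<Rightarrow> complex ^ 'd" and m n s :: nat and \<alpha> \<beta> :: real
  assumes "tight_frame a m \<alpha>"
    and "tight_frame b n \<beta>"
    and "s_order_incompatible a m \<alpha> b n \<beta> s"
  shows "s + t_min a m b n = m + n"
proof -
  note inc1 = assms(3)[unfolded s_order_incompatible_def, THEN conjunct1, rule_format]
  note inc2 = assms(3)[unfolded s_order_incompatible_def, THEN conjunct2]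
  obtain S0 T0 x0 where w: "S0 \<noteq> {}" "S0 \<subseteq> {1..m}" "T0 \<noteq> {}" "T0 \<subseteq> {1..n}"
    "card S0 + card T0 = s" "x0 \<noteq> 0"
    "(\<Sum>k\<in>S0. (cmod (cinner x0 (a k)))\<^sup>2) = \<alpha> * (norm x0)\<^sup>2"
    "(\<Sum>j\<in>T0. (cmod (cinner x0 (b j)))\<^sup>2) = \<beta> * (norm x0)\<^sup>2"
    using inc2 by blast
  have cS0: "card S0 \<le> m" using card_mono[OF _ w(2)] by simp
  have cT0: "card T0 \<le> n" using card_mono[OF _ w(4)] by simp
  have sle: "s \<le> m + n" using cS0 cT0 w(5) by simp
  define P where "P t \<longleftrightarrow> (\<forall>S T. S \<subset> {1..m} \<and> T \<subset> {1..n} \<and> card S + card T > t \<longrightarrow>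
       vec.span (a ` S \<union> b ` T) = (UNIV :: (complex ^ 'd) set))" for t
  have P1: "P (m + n - s)"
    unfolding P_def
  proof (intro allI impI, elim conjE, rule ccontr)
    fix S T :: "nat set"
    assume S: "S \<subset> {1..m}" and T: "T \<subset> {1..n}" and c: "card S + card T > m + n - s"
      and ns: "vec.span (a ` S \<union> b ` T) \<noteq> UNIV"
    obtain x where x: "x \<noteq> 0" "\<forall>v\<in>a ` S \<union> b ` T. cinner x v = 0"
      using perp_exists[OF ns] by blast
    let ?S = "{1..m} - S" and ?T = "{1..n} - T"
    have ne1: "?S \<noteq> {}" using S by blast
    have ne2: "?T \<noteq> {}" using T by blast
    have cS: "card ?S = m - card S" using S card_Diff_subset[of S "{1..m}"] finite_subset[of S "{1..m}"] by auto
    have cT: "card ?T = n - card T" using T card_Diff_subset[of T "{1..n}"] finite_subset[of T "{1..n}"] by auto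
    have cSm: "card S \<le> m" using S by (metis card_atLeastAtMost card_mono diff_Suc_1 finite_atLeastAtMost psubset_imp_subset)
    have cTn: "card T \<le> n" using T by (metis card_atLeastAtMost card_mono diff_Suc_1 finite_atLeastAtMost psubset_imp_subset)
    have lt: "card ?S + card ?T < s" using cS cT cSm cTn c sle by linarith
    have e1: "(\<Sum>k\<in>?S. (cmod (cinner x (a k)))\<^sup>2) = \<alpha> * (norm x)\<^sup>2"
      using tight_eq[OF assms(1), of ?S x] x(2) S by (auto simp: Diff_Diff_Int)
    have e2: "(\<Sum>j\<in>?T. (cmod (cinner x (b j)))\<^sup>2) = \<beta> * (norm x)\<^sup>2"
      using tight_eq[OF assms(2), of ?T x] x(2) T by (auto simp: Diff_Diff_Int)
    show False using inc1[of ?S ?T x] ne1 ne2 lt x(1) e1 e2 by blast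
  qed
  have P2: "\<not> P t" if "t < m + n - s" for t
  proof
    assume p: "P t"
    let ?S = "{1..m} - S0" and ?T = "{1..n} - T0"
    have S: "?S \<subset> {1..m}" using w(1,2) by blast
    have T: "?T \<subset> {1..n}" using w(3,4) by blast
    have cS: "card ?S = m - card S0" using w(2) by (simp add: card_Diff_subset finite_subset)
    have cT: "card ?T = n - card T0" using w(4) by (simp add: card_Diff_subset finite_subset)
    have "card ?S + card ?T > t" using cS cT cS0 cT0 w(5) that by linarith
    then have sp: "vec.span (a ` ?S \<union> b ` ?T) = UNIV" using p S T unfolding P_def by blast
    have "\<forall>v\<in>a ` ?S \<union> b ` ?T. cinner x0 v = 0"
      using tight_eq[OF assms(1) w(2), of x0] tight_eq[OF assms(2) w(4), of x0] w(7,8) by blast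
    then show False using perp_not_span[OF w(6)] sp by blast
  qed
  have "t_min a m b n = m + n - s"
    unfolding t_min_def P_def[symmetric]
  proof (rule Least_equality)
    show "P (m + n - s)" by (rule P1)
  next
    fix y assume "P y"
    then show "m + n - s \<le> y" using P2 not_less by blast
  qed
  then show ?thesis using sle by simp
qed

end
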